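(* For integers $m\ge1$ and $1\le j\le m-1$, $$d_{j+1,m}=\frac{2m+1}{j+1}\,d_{j,m}-\frac{(m+j)(m+1-j)}{j(j+1)}\,d_{j-1,m}.$$ Also $d_{m,m}=2^{-m}\binom{2m}{m}$ and $d_{m-1,m}=(2m+1)2^{-(m+1)}\binom{2m}{m}$.
   Context: $d_{l,m}=2^{-2m}\sum_{k=l}^{m}2^{k}\binom{2m-2k}{m-k}\binom{m+k}{m}\binom{k}{l}$ for $0\le l\le m$. *)

theory Defs
  imports Complex_Main
begin

definition d :: "nat \<Rightarrow> nat \<Rightarrow> real" where
  "d l m = (1 / 2 ^ (2 * m)) *
     (\<Sum>k = l..m. 2 ^ k * real ((2*m - 2*k) choose (m - k)) * real ((m + k) choose m) * real (k choose l))"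

end

theory Submission
  imports Defs
begin

lemma choose_step_nat: "Suc i * (k choose Suc i) = (k - i) * (k choose i)"
proof (cases "i < k")
  case True
  then obtain b where k: "k = Suc (i + b)" by (metis add_Suc_right less_imp_Suc_add)
  show ?thesis using Suc_times_binomial_add[of i b] unfolding k by simp
next
  case False
  then show ?thesis by simp
qed

lemma choose_step_real:
  "real (Suc i) * real (k choose Suc i) = (real k - real i) * real (k choose i)"
proof (cases "i \<le> k")
  case True
  have "real (Suc i * (k choose Suc i)) = real ((k - i) * (k choose i))"
    using choose_step_nat by metis
  then show ?thesis using True by (simp add: of_nat_diff algebra_simps)
next
  case False
  then show ?thesis by (simp add: binomial_eq_0)
qed

lemma central_step:
  assumes "n \<ge> 1"
  shows "real ((2*n) choose n) * real n = 2 * (2 * real n - 1) * real ((2*n - 2) choose (n - 1))"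
proof -
  obtain p where n: "n = Suc p" using assms by (cases n) auto
  have e1: "Suc (Suc (2*p)) * (Suc (2*p) choose p) = (Suc (Suc (2*p)) choose Suc p) * Suc p"
    by (rule Suc_times_binomial_eq)
  have e2: "Suc (2*p) * (2*p choose p) = (Suc (2*p) choose Suc p) * Suc p"
    by (rule Suc_times_binomial_eq)
  have e3: "(Suc (2*p) choose Suc p) = (Suc (2*p) choose p)"
    using binomial_symmetric[of "Suc p" "Suc (2*p)"] by simp
  have "(Suc (Suc (2*p)) choose Suc p) * Suc p * Suc p
      = (Suc (Suc (2*p)) * (Suc (2*p) * (2*p choose p)))"
    using e1 e2 e3 by (metis mult.assoc)
  also have "\<dots> = Suc p * (2 * (Suc (2*p) * (2*p choose p)))" by simp
  finally have "(Suc (Suc (2*p)) choose Suc p) * Suc p = 2 * (Suc (2*p) * (2*p choose p))"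
    by (simp del: binomial_Suc_Suc mult_Suc mult_Suc_right add: mult.commute)
  hence "real ((Suc (Suc (2*p)) choose Suc p) * Suc p) = real (2 * (Suc (2*p) * (2*p choose p)))"
    by (simp only:)
  hence "real (Suc (Suc (2*p)) choose Suc p) * (real p + 1)
      = 2 * ((2*real p + 1) * real (2*p choose p))"
    by (simp del: binomial_Suc_Suc add: algebra_simps)
  thus ?thesis unfolding n by (simp del: binomial_Suc_Suc add: algebra_simps)
qed

lemma upper_step:
  "real ((m + k + 1) choose m) * (real k + 1) = (real m + real k + 1) * real ((m + k) choose m)"
proof -
  have "Suc (m+k) * ((m+k) choose k) = (Suc (m+k) choose Suc k) * Suc k"
    by (rule Suc_times_binomial_eq)
  moreover have "(m+k) choose k = (m+k) choose m"
    using binomial_symmetric[of k "m+k"] by simp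
  moreover have "Suc (m+k) choose Suc k = (m + k + 1) choose m"
    using binomial_symmetric[of "Suc k" "Suc (m+k)"] by simp
  ultimately have "real (Suc (m+k) * ((m+k) choose m)) = real (((m + k + 1) choose m) * Suc k)"
    by simp
  thus ?thesis by (simp add: algebra_simps)
qed

theorem mainTheorem14:
  fixes m :: nat
  assumes "m \<ge> 1"
  shows "(\<forall>j::nat. 1 \<le> j \<and> j \<le> m - 1 \<longrightarrow>
            d (j + 1) m = (2 * real m + 1) / (real j + 1) * d j m
              - (real m + real j) * (real m + 1 - real j) / (real j * (real j + 1)) * d (j - 1) m)
       \<and> d m m = real ((2 * m) choose m) / 2 ^ m
       \<and> d (m - 1) m = (2 * real m + 1) * real ((2 * m) choose m) / 2 ^ (m + 1)"
proof -
  define T where "T k = 2 ^ k * real ((2*m - 2*k) choose (m - k)) * real ((m + k) choose m)" for k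
  define S where "S l = (\<Sum>k = 0..m. T k * real (k choose l))" for l
  have dS: "d l m = S l / 2 ^ (2*m)" for l
  proof -
    have "(\<Sum>k = l..m. T k * real (k choose l)) = S l"
      unfolding S_def
      by (rule sum.mono_neutral_left) (auto simp: binomial_eq_0)
    thus ?thesis unfolding d_def T_def by simp
  qed
  have Tstep: "T (Suc k) * (2 * (real m - real k) - 1) * (real k + 1)
      = T k * (real m - real k) * (real m + real k + 1)" if "k < m" for k
  proof -
    define n where "n = m - k"
    have n1: "n \<ge> 1" using that unfolding n_def by simp
    have c: "real ((2*n) choose n) * real n = 2 * (2 * real n - 1) * real ((2*n - 2) choose (n - 1))"
      using central_step[OF n1] .
    have u: "real ((m + k + 1) choose m) * (real k + 1) = (real m + real k + 1) * real ((m + k) choose m)"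
      by (rule upper_step)
    have rn: "real n = real m - real k" using that unfolding n_def by simp
    have a1: "2*m - 2*Suc k = 2*n - 2" "m - Suc k = n - 1" "2*m - 2*k = 2*n" "m - k = n"
      unfolding n_def by auto
    have "T (Suc k) * (2 * (real m - real k) - 1) * (real k + 1)
        = 2^k * (2 * (2 * real n - 1) * real ((2*n - 2) choose (n - 1)))
            * (real ((m + k + 1) choose m) * (real k + 1))"
      unfolding T_def a1 rn[symmetric] by (simp add: algebra_simps)
    also have "\<dots> = 2^k * (real ((2*n) choose n) * real n) * ((real m + real k + 1) * real ((m + k) choose m))"
      using c u by simp
    also have "\<dots> = T k * (real m - real k) * (real m + real k + 1)"
      unfolding T_def a1 rn[symmetric] by (simp add: algebra_simps)
    finally show ?thesis .
  qed
  have key: "real j * (real j + 1) * S (j + 1) - (2 * real m + 1) * real j * S j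
      + (real m + real j) * (real m + 1 - real j) * S (j - 1) = 0" if j1: "j \<ge> 1" for j
  proof -
    define F where "F k = T k * (real j * (real j + 1) * real (k choose (j+1))
       - (2 * real m + 1) * real j * real (k choose j)
       + (real m + real j) * (real m + 1 - real j) * real (k choose (j - 1)))" for k
    define G where "G k = real j * (2 * real m + 1 - 2 * real k) * T k * real (k choose j)" for k
    have Sj: "Suc (j - 1) = j" using j1 by simp
    have e1: "real j * real (k choose j) = (real k - real j + 1) * real (k choose (j - 1))" for k
      using choose_step_real[of "j - 1" k] j1 by (simp add: Sj of_nat_diff)
    have e2: "(real j + 1) * real (k choose (j+1)) = (real k - real j) * real (k choose j)" for k
      using choose_step_real[of j k] by (simp add: add.commute)
    have e3: "real (Suc k choose j) = real (k choose j) + real (k choose (j - 1))" for k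
    proof -
      have "Suc k choose Suc (j - 1) = (k choose (j - 1)) + (k choose Suc (j - 1))"
        by (rule binomial_Suc_Suc)
      thus ?thesis unfolding Sj by simp
    qed
    have Fk: "F k = T k * real (k choose (j - 1)) * ((real k - real j + 1) * (real k - real j)
        - (2 * real m + 1) * (real k - real j + 1) + (real m + real j) * (real m + 1 - real j))" for k
    proof -
      have "real j * (real j + 1) * real (k choose (j+1)) = (real k - real j) * (real j * real (k choose j))"
        using arg_cong[OF e2[of k], of "\<lambda>x. real j * x"] by (simp only: mult.assoc mult.left_commute)
      also have "\<dots> = (real k - real j) * ((real k - real j + 1) * real (k choose (j - 1)))"
        using e1[of k] by simp
      finally have h: "real j * (real j + 1) * real (k choose (j+1)) = (real k - real j) * ((real k - real j + 1) * real (k choose (j - 1)))" .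
      have h2: "(2 * real m + 1) * real j * real (k choose j) = (2 * real m + 1) * ((real k - real j + 1) * real (k choose (j - 1)))"
        by (simp only: mult.assoc e1)
      show ?thesis unfolding F_def h h2 by (simp add: algebra_simps)
    qed
    have Gk: "G k = T k * real (k choose (j - 1)) * (2 * real m + 1 - 2 * real k) * (real k - real j + 1)" for k
    proof -
      have "G k = T k * (2 * real m + 1 - 2 * real k) * (real j * real (k choose j))"
        unfolding G_def by (simp add: algebra_simps)
      also have "\<dots> = T k * (2 * real m + 1 - 2 * real k) * ((real k - real j + 1) * real (k choose (j - 1)))"
        by (simp only: e1)
      finally show ?thesis by (simp add: algebra_simps)
    qed
    have tel: "F k = G (Suc k) - G k" if "k < m" for k
    proof -
      have "G (Suc k) = (2 * real m + 1 - 2 * (real k + 1)) * T (Suc k) * (real j * real (Suc k choose j))"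
        unfolding G_def by (simp add: algebra_simps)
      also have "real j * real (Suc k choose j) = (real k + 1) * real (k choose (j - 1))"
        using e1[of k] e3[of k] by (simp add: algebra_simps)
      also have "(2 * real m + 1 - 2 * (real k + 1)) * T (Suc k) * ((real k + 1) * real (k choose (j - 1)))
          = (T (Suc k) * (2 * (real m - real k) - 1) * (real k + 1)) * real (k choose (j - 1))"
        by (simp add: algebra_simps)
      also have "\<dots> = T k * (real m - real k) * (real m + real k + 1) * real (k choose (j - 1))"
        using Tstep[OF that] by simp
      finally have "G (Suc k) = T k * (real m - real k) * (real m + real k + 1) * real (k choose (j - 1))" .
      thus ?thesis unfolding Fk Gk by (simp add: algebra_simps)
    qed
    have Fm: "F m = - G m" unfolding Fk Gk by (simp add: algebra_simps)
    have G0: "G 0 = 0" unfolding G_def using j1 by simp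
    have "(\<Sum>k = 0..m. F k) = (\<Sum>k<m. F k) + F m"
      by (simp add: atLeast0AtMost sum.atMost_Suc lessThan_Suc_atMost[symmetric])
    also have "(\<Sum>k<m. F k) = (\<Sum>k<m. G (Suc k) - G k)"
      using tel by (intro sum.cong) auto
    also have "\<dots> = G m - G 0" by (rule sum_lessThan_telescope)
    finally have "(\<Sum>k = 0..m. F k) = 0" using Fm G0 by simp
    moreover have "(\<Sum>k = 0..m. F k) = real j * (real j + 1) * S (j + 1) - (2 * real m + 1) * real j * S j
      + (real m + real j) * (real m + 1 - real j) * S (j - 1)"
      unfolding F_def S_def by (simp add: sum.distrib sum_subtractf sum_distrib_left algebra_simps)
    ultimately show ?thesis by simp
  qed
  have Sm: "S m = 2 ^ m * real ((2*m) choose m)"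
  proof -
    have "S m = (\<Sum>k\<in>{m}. T k * real (k choose m))"
      unfolding S_def by (rule sum.mono_neutral_right) (auto simp: binomial_eq_0)
    thus ?thesis unfolding T_def by (simp add: mult_2)
  qed
  have Sm1: "S (m + 1) = 0" unfolding S_def by (simp add: binomial_eq_0)
  have c1: "\<forall>j::nat. 1 \<le> j \<and> j \<le> m - 1 \<longrightarrow>
            d (j + 1) m = (2 * real m + 1) / (real j + 1) * d j m
              - (real m + real j) * (real m + 1 - real j) / (real j * (real j + 1)) * d (j - 1) m"
  proof (intro allI impI)
    fix j :: nat assume "1 \<le> j \<and> j \<le> m - 1"
    hence j1: "j \<ge> 1" by simp
    have k: "real j * (real j + 1) * S (j + 1) = (2 * real m + 1) * real j * S j
      - (real m + real j) * (real m + 1 - real j) * S (j - 1)" using key[OF j1] by simp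
    have jp: "real j > 0" using j1 by simp
    show "d (j + 1) m = (2 * real m + 1) / (real j + 1) * d j m
              - (real m + real j) * (real m + 1 - real j) / (real j * (real j + 1)) * d (j - 1) m"
    proof -
      let ?X = "(real m + real j) * (real m + 1 - real j)"
      have jj: "real j * (real j + 1) \<noteq> 0" using jp by simp
      have "S (j + 1) = ((2 * real m + 1) * real j * S j - ?X * S (j - 1)) / (real j * (real j + 1))"
        using k jj by (simp add: eq_divide_eq mult.commute)
      also have "\<dots> = (2 * real m + 1) / (real j + 1) * S j - ?X / (real j * (real j + 1)) * S (j - 1)"
        using jp by (simp add: diff_divide_distrib)
      finally have "S (j + 1) = (2 * real m + 1) / (real j + 1) * S j - ?X / (real j * (real j + 1)) * S (j - 1)" .
      thus ?thesis unfolding dS by (simp add: diff_divide_distrib)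
    qed
  qed
  have p2: "(2::real) ^ (2*m) = 2 ^ m * 2 ^ m" by (metis mult_2 power_add)
  have c2: "d m m = real ((2 * m) choose m) / 2 ^ m"
    unfolding dS Sm p2 by (simp add: field_simps)
  have c3: "d (m - 1) m = (2 * real m + 1) * real ((2 * m) choose m) / 2 ^ (m + 1)"
  proof -
    have k: "real m * (real m + 1) * S (m + 1) - (2 * real m + 1) * real m * S m
      + (real m + real m) * (real m + 1 - real m) * S (m - 1) = 0" using key[OF assms] by simp
    have mp: "real m > 0" using assms by simp
    have "real m * (2 * S (m - 1)) = real m * ((2 * real m + 1) * S m)" using k Sm1 by (simp add: algebra_simps)
    hence "2 * S (m - 1) = (2 * real m + 1) * S m" using mp by simp
    hence "S (m - 1) = (2 * real m + 1) / 2 * S m" by simp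
    thus ?thesis unfolding dS Sm p2 by (simp add: field_simps)
  qed
  show ?thesis using c1 c2 c3 by blast
qed

end
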